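(* Let $p$ be a prime and $b$ an integer with $0<b<p$. If $(p-b)(p-b^{-1})=2p+1$, then $|\mathrm{inv}_{1,b}|=5$.
   Context: Let $S=\mathbb{C}[x_1,x_2]$, $\zeta=e^{2\pi i/p}$, $G=\mathbb{Z}/p\mathbb{Z}=\langle\zeta\rangle$ acting on $S$ by $x_1\mapsto\zeta x_1$, $x_2\mapsto\zeta^bx_2$, with invariant ring $S^G_{1,b}$ (spanned by monomials $x_1^cx_2^d$ with $c+bd\equiv0\pmod p$). $\mathrm{inv}_{1,b}$ denotes the minimal set of monomial generators of $S^G_{1,b}$ as a $\mathbb{C}$-algebra: the nonconstant invariant monomials that are not a product of two nonconstant invariant monomials. $b^{-1}$ is the unique integer $0<b^{-1}<p$ with $bb^{-1}\equiv1\pmod p$. *)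

theory Defs
  imports "HOL-Number_Theory.Number_Theory"
begin

text \<open>A monomial x1^c x2^d of C[x1,x2] is represented by its exponent pair (c,d).
  It is invariant under x1 -> zeta x1, x2 -> zeta^b x2 iff c + b d = 0 mod p.\<close>

definition invariant_monomial :: "nat \<Rightarrow> nat \<Rightarrow> nat \<times> nat \<Rightarrow> bool" where
  "invariant_monomial p b m \<longleftrightarrow> [fst m + b * snd m = 0] (mod p)"

definition nonconst_invariant :: "nat \<Rightarrow> nat \<Rightarrow> nat \<times> nat \<Rightarrow> bool" where
  "nonconst_invariant p b m \<longleftrightarrow> m \<noteq> (0, 0) \<and> invariant_monomial p b m"

text \<open>inv_{1,b}: nonconstant invariant monomials that are not a product of two
  nonconstant invariant monomials (product of monomials = sum of exponent pairs).\<close>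

definition inv_gens :: "nat \<Rightarrow> nat \<Rightarrow> (nat \<times> nat) set" where
  "inv_gens p b = {m. nonconst_invariant p b m \<and>
     \<not> (\<exists>m1 m2. nonconst_invariant p b m1 \<and> nonconst_invariant p b m2 \<and>
               fst m1 + fst m2 = fst m \<and> snd m1 + snd m2 = snd m)}"

definition binv :: "nat \<Rightarrow> nat \<Rightarrow> nat" where
  "binv p b = (THE x. 0 < x \<and> x < p \<and> [b * x = 1] (mod p))"

end

theory Submission
  imports Defs
begin

lemma ge1: "1 \<le> x \<Longrightarrow> 0 \<le> y \<Longrightarrow> y \<le> x*(y::int)"
  using mult_right_mono[of 1 x y] by simp

lemma key:
  fixes p q s t c d :: nat
  assumes q: "q = 2*s+1" and p: "p = 2*s*t+s+t" and s1: "s \<ge> 1" and t1: "t \<ge> 1"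
    and inv: "int p dvd int c - int q * int d" and nz: "(c,d) \<noteq> (0,0)"
  shows "\<exists>g \<in> {(p,0),(q,1),(s+1,t+1),(1,2*t+1),(0,p)}. fst g \<le> c \<and> snd g \<le> d"
proof -
  obtain k where k: "int c - int q * int d = int p * k" using inv by (auto simp: dvd_def)
  define S where "S = int s"
  define T where "T = int t"
  define C where "C = int c"
  define D where "D = int d"
  have qS: "int q = 2*S+1" using q S_def by simp
  have pS: "int p = 2*S*T+S+T" using p S_def T_def by simp
  have cC: "C = (2*S+1)*D + (2*S*T+S+T)*k" using k qS pS C_def D_def by (simp add: algebra_simps)
  have S1: "S \<ge> 1" and T1: "T \<ge> 1" using s1 t1 S_def T_def by auto
  have C0: "C \<ge> 0" and D0: "D \<ge> 0" using C_def D_def by auto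
  have nz': "C \<noteq> 0 \<or> D \<noteq> 0" using nz C_def D_def by auto
  show ?thesis
  proof (cases "k \<ge> 0")
    case True
    show ?thesis
    proof (cases "D = 0")
      case True
      with cC have Ck: "C = (2*S*T+S+T)*k" by simp
      moreover have "k \<ge> 1" using \<open>k\<ge>0\<close> nz' True Ck by (cases "k = 0") auto
      moreover have "2*S*T+S+T > 0" using S1 T1 by (simp add: add_pos_pos)
      ultimately have "C \<ge> 2*S*T+S+T" by (simp add: mult_le_cancel_left1)
      hence "p \<le> c" using pS C_def by simp
      moreover have "d = 0" using True D_def by simp
      ultimately show ?thesis by auto
    next
      case False
      hence "D \<ge> 1" using D0 by simp
      have "(2*S+1)*D \<ge> 2*S+1" using \<open>D\<ge>1\<close> S1 by simp
      moreover have "(2*S*T+S+T)*k \<ge> 0" using S1 T1 True by simp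
      ultimately have "C \<ge> 2*S+1" using cC by linarith
      hence "q \<le> c" using qS C_def by simp
      moreover have "1 \<le> d" using \<open>D\<ge>1\<close> D_def by simp
      ultimately show ?thesis by auto
    qed
  next
    case False
    hence k1: "k \<le> -1" by simp
    define \<alpha> where "\<alpha> = D + k*(T+1)"
    define \<beta> where "\<beta> = 2*D + k*(2*T+1)"
    have idc1: "C = \<alpha>*(2*S+1) - k*(S+1)" using cC unfolding \<alpha>_def by (simp add: algebra_simps)
    have idd1: "D = \<alpha> - k*(T+1)" unfolding \<alpha>_def by simp
    have idc2: "C = \<beta>*(S+1) - \<alpha>" using cC unfolding \<alpha>_def \<beta>_def by (simp add: algebra_simps)
    have idd2: "D = \<beta>*(T+1) - \<alpha>*(2*T+1)" unfolding \<alpha>_def \<beta>_def by (simp add: algebra_simps)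
    have idd3: "D = C*(2*T+1) - (2*S*T+S+T)*\<beta>" using cC unfolding \<beta>_def by (simp add: algebra_simps)
    have mk1: "-k*(S+1) \<ge> S+1" using ge1[of "-k" "S+1"] k1 S1 by simp
    have mk2: "-k*(T+1) \<ge> T+1" using ge1[of "-k" "T+1"] k1 T1 by simp
    show ?thesis
    proof (cases "\<alpha> \<ge> 0")
      case True
      have "\<alpha>*(2*S+1) \<ge> 0" using True S1 by simp
      hence "C \<ge> S+1" using idc1 mk1 by linarith
      moreover have "D \<ge> T+1" using idd1 mk2 True by linarith
      ultimately have "s+1 \<le> c \<and> t+1 \<le> d" using C_def D_def S_def T_def by simp
      thus ?thesis by auto
    next
      case False
      show ?thesis
      proof (cases "\<beta> \<ge> 1")
        case True
        have "\<beta>*(S+1) \<ge> S+1" using ge1[of \<beta> "S+1"] True S1 by simp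
        hence "C \<ge> S+1" using idc2 False by linarith
        moreover have "\<beta>*(T+1) \<ge> T+1" using ge1[of \<beta> "T+1"] True T1 by simp
        moreover have "\<alpha>*(2*T+1) \<le> 0" using False T1 by (simp add: mult_nonpos_nonneg)
        ultimately have "C \<ge> S+1" "D \<ge> T+1" using idd2 by linarith+
        hence "s+1 \<le> c \<and> t+1 \<le> d" using C_def D_def S_def T_def by simp
        thus ?thesis by auto
      next
        case False
        hence b0: "\<beta> \<le> 0" by simp
        have pb: "(2*S*T+S+T)*\<beta> \<le> 0" using b0 S1 T1 by (simp add: mult_nonneg_nonpos)
        show ?thesis
        proof (cases "C = 0")
          case True
          hence "D \<noteq> 0" using nz' by simp
          hence "\<beta> \<noteq> 0" using idd3 True by auto
          hence "\<beta> \<le> -1" using b0 by simp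
          hence "(2*S*T+S+T)*(-\<beta>) \<ge> (2*S*T+S+T)" using S1 T1 ge1[of "-\<beta>" "2*S*T+S+T"] by (simp add: mult.commute)
          hence "D \<ge> 2*S*T+S+T" using idd3 True by simp
          hence "p \<le> d" using pS D_def by simp
          moreover have "c = 0" using True C_def by simp
          ultimately show ?thesis by auto
        next
          case False
          hence "C \<ge> 1" using C0 by simp
          hence "C*(2*T+1) \<ge> 2*T+1" using ge1[of C "2*T+1"] T1 by simp
          hence "D \<ge> 2*T+1" using idd3 pb by linarith
          hence "2*t+1 \<le> d" using D_def T_def by simp
          moreover have "1 \<le> c" using \<open>C\<ge>1\<close> C_def by simp
          ultimately show ?thesis by auto
        qed
      qed
    qed
  qed
qed

theorem proposition5p1:
  fixes p b :: nat
  assumes "prime p" and "0 < b" and "b < p"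
    and "(int p - int b) * (int p - int (binv p b)) = 2 * int p + 1"
  shows "card (inv_gens p b) = 5"
proof -
  define q where "q = p - b"
  define a where "a = p - binv p b"
  have bp: "binv p b \<le> p"
  proof (rule ccontr)
    assume "\<not> binv p b \<le> p"
    hence "int p - int (binv p b) < 0" by simp
    moreover have "int p - int b > 0" using assms(3) by simp
    ultimately have "(int p - int b) * (int p - int (binv p b)) < 0" by (simp add: mult_pos_neg)
    thus False using assms(4) by simp
  qed
  have qa_int: "int q * int a = 2 * int p + 1" using assms(3,4) bp q_def a_def by (simp add: of_nat_diff)
  hence "int (q*a) = int (2*p+1)" by simp
  hence qa: "q * a = 2*p+1" using of_nat_eq_iff by blast
  have "odd (q*a)" using qa by simp
  hence oq: "odd q" and oa: "odd a" by auto
  obtain s where s: "q = 2*s+1" using oq oddE by blast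
  obtain t where t: "a = 2*t+1" using oa oddE by blast
  have "(2*s+1)*(2*t+1) = 2*p+1" using qa s t by simp
  hence "4*s*t + 2*s + 2*t = 2*p" by (simp add: algebra_simps)
  hence p: "p = 2*s*t+s+t" by simp
  have ap: "a \<le> p" using a_def by simp
  have qp: "q < p" using q_def assms by simp
  have s1: "s \<ge> 1"
  proof (rule ccontr)
    assume "\<not> s \<ge> 1" hence "s = 0" by simp
    hence "a = 2*p+1" using qa s by simp
    thus False using ap by simp
  qed
  have t1: "t \<ge> 1"
  proof (rule ccontr)
    assume "\<not> t \<ge> 1" hence "t = 0" by simp
    hence "q = 2*p+1" using qa t by simp
    thus False using qp by simp
  qed
  have st1: "s*t \<ge> s" "s*t \<ge> t" using s1 t1 by simp_all
  have p': "p = 2*(s*t)+s+t" using p by (simp add: mult.assoc)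
  have ps: "p > 2*s+1" and pt: "p > 2*t+1" using p' st1 s1 t1 by linarith+
  define NI where "NI m \<longleftrightarrow> m \<noteq> (0,0) \<and> int p dvd int (fst m) - int q * int (snd m)" for m :: "nat \<times> nat"
  have invc: "invariant_monomial p b m \<longleftrightarrow> int p dvd int (fst m) - int q * int (snd m)" for m
  proof -
    have "invariant_monomial p b m \<longleftrightarrow> int p dvd int (fst m) + int b * int (snd m)"
      unfolding invariant_monomial_def cong_0_iff by (metis of_nat_dvd_iff of_nat_add of_nat_mult)
    also have "int b = int p - int q" using q_def assms(3) by simp
    also have "int (fst m) + (int p - int q) * int (snd m) = (int (fst m) - int q * int (snd m)) + int (snd m) * int p"
      by (simp add: algebra_simps)
    finally show ?thesis by simp
  qed
  have NIc: "nonconst_invariant p b m \<longleftrightarrow> NI m" for m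
    unfolding nonconst_invariant_def NI_def invc by simp
  define G where "G = {(p,0),(q,1),(s+1,t+1),(1,2*t+1),(0,p)}"
  have E: "\<exists>g\<in>G. fst g \<le> fst m \<and> snd g \<le> snd m" if "NI m" for m
    using key[OF s p s1 t1, of "fst m" "snd m"] that unfolding NI_def G_def by auto
  have GI: "NI g" if "g \<in> G" for g
  proof -
    have "int p dvd int (s+1) - int q * int (t+1)"
    proof -
      have "int (s+1) - int q * int (t+1) = int p * (-1)" using s p by (simp add: algebra_simps)
      thus ?thesis by (metis dvd_triv_left)
    qed
    moreover have "int p dvd 1 - int q * int (2*t+1)"
    proof -
      have "1 - int q * int (2*t+1) = int p * (-2)" using qa_int t by (simp add: algebra_simps)
      thus ?thesis by (metis dvd_triv_left)
    qed
    ultimately show ?thesis using that ps unfolding G_def NI_def by auto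
  qed
  have AC: "g' = g" if "g \<in> G" "g' \<in> G" "fst g' \<le> fst g" "snd g' \<le> snd g" for g g'
    using that ps pt s1 t1 s unfolding G_def by auto
  have NIdiff: "NI (fst m - fst g, snd m - snd g)" if "NI m" "NI g" "fst g \<le> fst m" "snd g \<le> snd m" "g \<noteq> m" for m g
  proof -
    have "int p dvd (int (fst m) - int q * int (snd m)) - (int (fst g) - int q * int (snd g))"
      using that unfolding NI_def by (simp add: dvd_diff)
    moreover have "(int (fst m) - int q * int (snd m)) - (int (fst g) - int q * int (snd g))
       = int (fst m - fst g) - int q * int (snd m - snd g)" using that(3,4) by (simp add: of_nat_diff algebra_simps)
    ultimately show ?thesis using that(3,4,5) unfolding NI_def by (auto simp: prod_eq_iff)
  qed
  have eq: "inv_gens p b = G"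
  proof
    show "inv_gens p b \<subseteq> G"
    proof
      fix m assume m: "m \<in> inv_gens p b"
      hence nm: "NI m" and irr: "\<not> (\<exists>m1 m2. NI m1 \<and> NI m2 \<and> fst m1 + fst m2 = fst m \<and> snd m1 + snd m2 = snd m)"
        unfolding inv_gens_def NIc by auto
      obtain g where g: "g \<in> G" "fst g \<le> fst m" "snd g \<le> snd m" using E[OF nm] by blast
      show "m \<in> G"
      proof (cases "g = m")
        case True thus ?thesis using g by simp
      next
        case False
        have "NI (fst m - fst g, snd m - snd g)" using NIdiff[OF nm GI[OF g(1)] g(2,3) False] .
        hence "NI g \<and> NI (fst m - fst g, snd m - snd g) \<and> fst g + fst (fst m - fst g, snd m - snd g) = fst m
             \<and> snd g + snd (fst m - fst g, snd m - snd g) = snd m" using GI[OF g(1)] g by simp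
        hence False using irr by blast
        thus ?thesis ..
      qed
    qed
  next
    show "G \<subseteq> inv_gens p b"
    proof
      fix g assume g: "g \<in> G"
      have "\<not> (NI m1 \<and> NI m2 \<and> fst m1 + fst m2 = fst g \<and> snd m1 + snd m2 = snd g)" for m1 m2
      proof
        assume h: "NI m1 \<and> NI m2 \<and> fst m1 + fst m2 = fst g \<and> snd m1 + snd m2 = snd g"
        obtain g' where g': "g' \<in> G" "fst g' \<le> fst m1" "snd g' \<le> snd m1" using E h by blast
        have "g' = g" using AC[OF g g'(1)] g' h by auto
        hence "m2 = (0,0)" using g' h by (auto simp: prod_eq_iff)
        thus False using h unfolding NI_def by simp
      qed
      thus "g \<in> inv_gens p b" using GI[OF g] unfolding inv_gens_def NIc by auto
    qed
  qed
  have "card G = 5" unfolding G_def using ps pt s1 t1 s by auto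
  thus ?thesis using eq by simp
qed

end
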